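(* Let $\alpha,\beta,\gamma$ be real numbers with $\gamma>0$ and $(\alpha,\beta)\neq(0,0)$, and consider the discrete-time linear system $$A(t+1) = (1-\alpha\gamma)A(t) + \alpha\gamma B(t),\qquad B(t+1) = (1-\beta\gamma)B(t) + \beta\gamma A(t).$$ If $1-\alpha\gamma-\beta\gamma = 1$, then the system is unstable: there exist initial values $(A(0),B(0))\in\mathbb{R}^2$ for which the trajectory $(A(t),B(t))_{t\ge 0}$ is unbounded.
   Context: The transition matrix of the system is $M=\begin{bmatrix}1-\alpha\gamma & \alpha\gamma\\ \beta\gamma & 1-\beta\gamma\end{bmatrix}$; its eigenvalues are $1$ and $1-\alpha\gamma-\beta\gamma$, so in the case considered both eigenvalues equal $1$ (the system would be called marginally stable by the eigenvalue criterion), and the claim is that the trajectories nevertheless diverge. *)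

theory Defs
  imports "HOL-Analysis.Analysis"
begin

fun traj :: "real \<Rightarrow> real \<Rightarrow> real \<Rightarrow> real \<Rightarrow> real \<Rightarrow> nat \<Rightarrow> real \<times> real" where
  "traj \<alpha> \<beta> \<gamma> A0 B0 0 = (A0, B0)"
| "traj \<alpha> \<beta> \<gamma> A0 B0 (Suc t) =
     (let (a, b) = traj \<alpha> \<beta> \<gamma> A0 B0 t
      in ((1 - \<alpha> * \<gamma>) * a + \<alpha> * \<gamma> * b, (1 - \<beta> * \<gamma>) * b + \<beta> * \<gamma> * a))"

end

theory Submission
  imports Defs
begin

lemma traj_form:
  assumes "\<beta> = - \<alpha>"
  shows "traj \<alpha> \<beta> \<gamma> 1 0 t = (1 - real t * (\<alpha>*\<gamma>), - real t * (\<alpha>*\<gamma>))"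
  using assms by (induction t) (auto simp: algebra_simps)

theorem proposition3:
  fixes \<alpha> \<beta> \<gamma> :: real
  assumes "\<gamma> > 0" and "(\<alpha>, \<beta>) \<noteq> (0, 0)"
    and "1 - \<alpha> * \<gamma> - \<beta> * \<gamma> = 1"
  shows "\<exists>A0 B0. \<not> bounded (range (traj \<alpha> \<beta> \<gamma> A0 B0))"
proof (intro exI notI)
  have "(\<alpha> + \<beta>) * \<gamma> = 0" using assms(3) by (simp add: algebra_simps)
  hence b: "\<beta> = - \<alpha>" using assms(1) by simp
  hence "\<alpha> \<noteq> 0" using assms(2) by auto
  hence c: "\<alpha> * \<gamma> \<noteq> 0" using assms(1) by simp
  define c where "c = \<alpha> * \<gamma>"
  assume "bounded (range (traj \<alpha> \<beta> \<gamma> 1 0))"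
  then obtain M where M: "\<And>t. norm (traj \<alpha> \<beta> \<gamma> 1 0 t) \<le> M"
    unfolding bounded_iff by blast
  have "\<And>t. \<bar>1 - real t * c\<bar> \<le> M"
  proof -
    fix t
    have "\<bar>1 - real t * c\<bar> = norm (fst (traj \<alpha> \<beta> \<gamma> 1 0 t))"
      using traj_form[OF b] c_def by simp
    also have "\<dots> \<le> norm (traj \<alpha> \<beta> \<gamma> 1 0 t)" unfolding norm_prod_def by (rule real_sqrt_sum_squares_ge1)
    finally show "\<bar>1 - real t * c\<bar> \<le> M" using M order_trans by blast
  qed
  moreover obtain n :: nat where n: "real n > (M + 1) / \<bar>c\<bar>"
    using reals_Archimedean2 by blast
  moreover have "\<bar>c\<bar> > 0" using c c_def by simp
  ultimately have "real n * \<bar>c\<bar> > M + 1" "\<bar>1 - real n * c\<bar> \<le> M"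
    by (auto simp: field_simps)
  moreover have "\<bar>real n * c\<bar> \<le> \<bar>1 - real n * c\<bar> + 1" by linarith
  ultimately show False by (simp add: abs_mult)
qed

end
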